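(* Let $A,B,C,D$ be smooth real functions on an open subset of $\mathbb R^4$ with coordinates $(x_0,x_1,x_2,x_3)$, $\partial_i=\partial/\partial x_i$, and let $h$ be the $H$-valued map $h=\begin{pmatrix}1&A&B&D\\0&1&A&C\\0&0&1&A\\0&0&0&1\end{pmatrix}$. Let $(V_0,V_1,V_2,V_3)$ be the framing dual to the coframing $h\,\mathrm dx$, explicitly $$V_0=\partial_0,\quad V_1=\partial_1-A\partial_0,\quad V_2=\partial_2-A\partial_1-(B-A^2)\partial_0,$$ $$V_3=\partial_3-A\partial_2-(C-A^2)\partial_1-(D-(C+B)A+A^3)\partial_0.$$ Then the $\mathrm{GL}(2)$-structure containing the coframing $h\,\mathrm dx$ is torsion-free if and only if $$\begin{aligned} &V_2(D)-V_3(B)-AV_2(B)-CV_2(A)+AV_3(A)+A^2V_2(A)=0,\\ &2V_1(D)-V_2(C)-2AV_1(B)-V_3(A)+AV_2(A)+2A^2V_1(A)-2CV_1(A)=0,\\ &V_0(D)-2V_1(C)+3V_1(B)-AV_0(B)-2V_2(A)-AV_1(A)-CV_0(A)+A^2V_0(A)=0,\\ &V_0(C)-2V_0(B)+V_1(A)+AV_0(A)=0. \end{aligned}$$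
   Context: $\mathcal V_3$ is the space of real binary cubic forms in $x,y$ with the linear-substitution action of $\mathrm{GL}(2,\mathbb R)$; $G_3\subset\mathrm{GL}(\mathcal V_3)$ is its image, and $\mathcal V_3\cong\mathbb R^4$ via $x^{3-i}y^i\mapsto e_{i+1}$. A $\mathrm{GL}(2)$-structure is a $G_3$-structure (reduction of the coframe bundle, coframes valued in $\mathbb R^4$, to $G_3$); the $\mathrm{GL}(2)$-structure containing a coframing $\eta$ is the one whose fibre at each point is the $G_3$-orbit of $\eta$. It is torsion-free if there is a principal $G_3$-connection $\theta$ with $\mathrm d\omega=-\theta\wedge\omega$ for the tautological form $\omega$. *)

theory Defs
  imports "HOL-Analysis.Analysis"
begin

definition pd :: "4 \<Rightarrow> (real^4 \<Rightarrow> real) \<Rightarrow> real^4 \<Rightarrow> real" where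
  "pd i f x = frechet_derivative f (at x) (axis i 1)"

fun Ck :: "nat \<Rightarrow> (real^4) set \<Rightarrow> (real^4 \<Rightarrow> real) \<Rightarrow> bool" where
  "Ck 0 U f = continuous_on U f"
| "Ck (Suc k) U f = ((\<forall>x\<in>U. f differentiable (at x)) \<and> (\<forall>i. Ck k U (pd i f)))"

definition smooth_on :: "(real^4) set \<Rightarrow> (real^4 \<Rightarrow> real) \<Rightarrow> bool" where
  "smooth_on U f \<longleftrightarrow> (\<forall>k. Ck k U f)"

text \<open>Binary cubic form with coefficient vector v (x^(3-i) y^i <-> e_(i+1), index i here).\<close>
definition cubic :: "real^4 \<Rightarrow> real \<Rightarrow> real \<Rightarrow> real" where
  "cubic v x y = v$0 * x^3 + v$1 * x^2 * y + v$2 * x * y^2 + v$3 * y^3"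

definition G3 :: "(real^4^4) set" where
  "G3 = {M. \<exists>a b c d. a * d - b * c \<noteq> 0 \<and>
           (\<forall>v x y. cubic (M *v v) x y = cubic v (a * x + b * y) (c * x + d * y))}"

definition g3 :: "(real^4^4) set" where
  "g3 = {X. \<exists>\<gamma>. \<gamma> 0 = mat 1 \<and> (\<forall>t. \<gamma> t \<in> G3) \<and> (\<gamma> has_vector_derivative X) (at 0)}"

text \<open>A coframing eta on U: eta p $ a $ j is the coefficient of dx^j in eta^a at p.
  The G_3-structure containing eta is torsion-free iff there is a (smooth) principal
  G_3-connection, equivalently (pulling back along the section eta) a smooth
  g_3-valued 1-form theta on U (theta p j = theta(d/dx_j) at p) with
  d eta = - theta \<and> eta.\<close>
definition torsion_free_Gstr :: "(real^4) set \<Rightarrow> (real^4 \<Rightarrow> real^4^4) \<Rightarrow> bool" where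
  "torsion_free_Gstr U \<eta> \<longleftrightarrow>
    (\<exists>\<theta> :: real^4 \<Rightarrow> 4 \<Rightarrow> real^4^4.
       (\<forall>j a b. smooth_on U (\<lambda>p. \<theta> p j $ a $ b)) \<and>
       (\<forall>p\<in>U. \<forall>j. \<theta> p j \<in> g3) \<and>
       (\<forall>p\<in>U. \<forall>a j k.
          pd j (\<lambda>q. \<eta> q $ a $ k) p - pd k (\<lambda>q. \<eta> q $ a $ j) p
          = - (\<Sum>b\<in>UNIV. \<theta> p j $ a $ b * \<eta> p $ b $ k - \<theta> p k $ a $ b * \<eta> p $ b $ j)))"

definition hmat :: "(real^4 \<Rightarrow> real) \<Rightarrow> (real^4 \<Rightarrow> real) \<Rightarrow> (real^4 \<Rightarrow> real) \<Rightarrow> (real^4 \<Rightarrow> real)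
                    \<Rightarrow> real^4 \<Rightarrow> real^4^4" where
  "hmat A B C D p = (\<chi> a j.
     if a = j then 1
     else if (a = 0 \<and> j = 1) \<or> (a = 1 \<and> j = 2) \<or> (a = 2 \<and> j = 3) then A p
     else if a = 0 \<and> j = 2 then B p
     else if a = 1 \<and> j = 3 then C p
     else if a = 0 \<and> j = 3 then D p
     else 0)"

definition V0 :: "(real^4 \<Rightarrow> real) \<Rightarrow> real^4 \<Rightarrow> real" where
  "V0 f p = pd 0 f p"
definition V1 :: "(real^4 \<Rightarrow> real) \<Rightarrow> (real^4 \<Rightarrow> real) \<Rightarrow> real^4 \<Rightarrow> real" where
  "V1 A f p = pd 1 f p - A p * pd 0 f p"
definition V2 :: "(real^4 \<Rightarrow> real) \<Rightarrow> (real^4 \<Rightarrow> real) \<Rightarrow> (real^4 \<Rightarrow> real) \<Rightarrow> real^4 \<Rightarrow> real" where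
  "V2 A B f p = pd 2 f p - A p * pd 1 f p - (B p - (A p)^2) * pd 0 f p"
definition V3 :: "(real^4 \<Rightarrow> real) \<Rightarrow> (real^4 \<Rightarrow> real) \<Rightarrow> (real^4 \<Rightarrow> real) \<Rightarrow> (real^4 \<Rightarrow> real)
                  \<Rightarrow> (real^4 \<Rightarrow> real) \<Rightarrow> real^4 \<Rightarrow> real" where
  "V3 A B C D f p = pd 3 f p - A p * pd 2 f p - (C p - (A p)^2) * pd 1 f p
      - (D p - (C p + B p) * A p + (A p)^3) * pd 0 f p"

end

theory Submission
  imports Defs
begin

lemma pd_const[simp]: "pd i (\<lambda>x. c) p = 0"
  by (simp add: pd_def)

lemma pd_cong:
  assumes "open U" "x \<in> U" "\<And>y. y \<in> U \<Longrightarrow> f y = g y"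
  shows "pd i f x = pd i g x"
proof -
  have "\<And>f'. (f has_derivative f') (at x) \<longleftrightarrow> (g has_derivative f') (at x)"
  proof
    fix f' assume "(f has_derivative f') (at x)"
    then show "(g has_derivative f') (at x)"
      by (rule has_derivative_transform_within_open[OF _ assms(1,2)]) (simp add: assms(3))
  next
    fix f' assume "(g has_derivative f') (at x)"
    then show "(f has_derivative f') (at x)"
      by (rule has_derivative_transform_within_open[OF _ assms(1,2)]) (simp add: assms(3))
  qed
  then show ?thesis unfolding pd_def frechet_derivative_def by simp
qed

lemma diff_cong:
  assumes "open U" "x \<in> U" "\<And>y. y \<in> U \<Longrightarrow> f y = g y" "f differentiable (at x)"
  shows "g differentiable (at x)"
proof -
  obtain f' where "(f has_derivative f') (at x)" using assms(4) unfolding differentiable_def by blast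
  then have "(g has_derivative f') (at x)"
    by (rule has_derivative_transform_within_open[OF _ assms(1,2)]) (simp add: assms(3))
  then show ?thesis unfolding differentiable_def by blast
qed

lemma Ck_cong:
  assumes "open U" "\<And>y. y \<in> U \<Longrightarrow> f y = g y" "Ck k U f"
  shows "Ck k U g"
  using assms(2,3)
proof (induction k arbitrary: f g)
  case 0
  then show ?case using continuous_on_cong by (metis Ck.simps(1))
next
  case (Suc k)
  have d: "\<forall>x\<in>U. g differentiable (at x)"
  proof
    fix x assume x: "x \<in> U"
    then have "f differentiable (at x)" using Suc.prems(2) by simp
    then show "g differentiable (at x)" using diff_cong[OF assms(1) x, of f g] Suc.prems(1) by blast
  qed
  have "Ck k U (pd i g)" for i
  proof -
    have "Ck k U (pd i f)" using Suc.prems by simp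
    moreover have "\<And>y. y \<in> U \<Longrightarrow> pd i f y = pd i g y"
      using pd_cong[OF assms(1)] Suc.prems(1) by blast
    ultimately show ?thesis using Suc.IH by blast
  qed
  then show ?case using d by simp
qed

lemma Ck_mono: "Ck (Suc k) U f \<Longrightarrow> Ck k U f"
proof (induction k arbitrary: f)
  case 0
  then have "\<forall>x\<in>U. f differentiable (at x)" by simp
  then have "continuous_on U f"
    by (intro differentiable_imp_continuous_on differentiable_at_imp_differentiable_on) blast
  then show ?case by simp
next
  case (Suc k)
  have 1: "\<forall>x\<in>U. f differentiable (at x)" and 2: "\<And>i. Ck (Suc k) U (pd i f)"
    using Suc.prems by (simp only: Ck.simps, blast)+
  have "\<And>i. Ck k U (pd i f)" using Suc.IH 2 by blast
  then show ?case using 1 by (simp only: Ck.simps, blast)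
qed

lemma pd_const_fun: "pd i (\<lambda>x. c) = (\<lambda>x. 0)"
  by (rule ext) simp

lemma Ck_const: "Ck k U (\<lambda>x. c)"
  by (induction k arbitrary: c) (auto simp: pd_const_fun)

lemma pd_add:
  assumes "f differentiable (at x)" "g differentiable (at x)"
  shows "pd i (\<lambda>x. f x + g x) x = pd i f x + pd i g x"
proof -
  have "((\<lambda>x. f x + g x) has_derivative (\<lambda>h. frechet_derivative f (at x) h + frechet_derivative g (at x) h)) (at x)"
    using assms by (intro has_derivative_add) (simp_all add: frechet_derivative_works)
  from frechet_derivative_at[OF this] show ?thesis unfolding pd_def by (simp add: fun_eq_iff)
qed

lemma pd_mult:
  assumes "f differentiable (at x)" "g differentiable (at x)"
  shows "pd i (\<lambda>x. f x * g x) x = f x * pd i g x + pd i f x * g x"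
proof -
  have "((\<lambda>x. f x * g x) has_derivative (\<lambda>h. f x * frechet_derivative g (at x) h + frechet_derivative f (at x) h * g x)) (at x)"
    using assms by (intro has_derivative_mult) (simp_all add: frechet_derivative_works)
  from frechet_derivative_at[OF this] show ?thesis unfolding pd_def by (simp add: fun_eq_iff)
qed

lemma Ck_add:
  assumes "open U"
  shows "Ck k U f \<Longrightarrow> Ck k U g \<Longrightarrow> Ck k U (\<lambda>x. f x + g x)"
proof (induction k arbitrary: f g)
  case 0
  then show ?case by (auto intro: continuous_on_add)
next
  case (Suc k)
  have "Ck k U (pd i (\<lambda>x. f x + g x))" for i
  proof -
    have "Ck k U (\<lambda>x. pd i f x + pd i g x)" using Suc by simp
    then show ?thesis
      by (rule Ck_cong[OF assms, rotated]) (use Suc.prems in \<open>simp add: pd_add\<close>)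
  qed
  moreover have "\<forall>x\<in>U. (\<lambda>x. f x + g x) differentiable (at x)"
    using Suc.prems by (auto intro!: differentiable_add)
  ultimately show ?case by simp
qed

lemma Ck_mult:
  assumes "open U"
  shows "Ck k U f \<Longrightarrow> Ck k U g \<Longrightarrow> Ck k U (\<lambda>x. f x * g x)"
proof (induction k arbitrary: f g)
  case 0
  then show ?case by (auto intro: continuous_on_mult)
next
  case (Suc k)
  have "Ck k U (pd i (\<lambda>x. f x * g x))" for i
  proof -
    have f: "Ck k U f" "Ck k U g" using Suc.prems Ck_mono by blast+
    have "Ck k U (\<lambda>x. f x * pd i g x + pd i f x * g x)"
      using Suc f by (intro Ck_add[OF assms]) simp_all
    then show ?thesis
      by (rule Ck_cong[OF assms, rotated]) (use Suc.prems in \<open>simp add: pd_mult\<close>)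
  qed
  moreover have "\<forall>x\<in>U. (\<lambda>x. f x * g x) differentiable (at x)"
    using Suc.prems by (auto intro!: differentiable_mult)
  ultimately show ?case by simp
qed

lemma smooth_const[intro]: "smooth_on U (\<lambda>x. c)"
  by (simp add: smooth_on_def Ck_const)

lemma smooth_add[intro]: "open U \<Longrightarrow> smooth_on U f \<Longrightarrow> smooth_on U g \<Longrightarrow> smooth_on U (\<lambda>x. f x + g x)"
  by (simp add: smooth_on_def Ck_add)

lemma smooth_mult[intro]: "open U \<Longrightarrow> smooth_on U f \<Longrightarrow> smooth_on U g \<Longrightarrow> smooth_on U (\<lambda>x. f x * g x)"
  by (simp add: smooth_on_def Ck_mult)

lemma smooth_minus[intro]: "open U \<Longrightarrow> smooth_on U f \<Longrightarrow> smooth_on U (\<lambda>x. - f x)"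
proof -
  assume "open U" "smooth_on U f"
  then have "smooth_on U (\<lambda>x. (-1) * f x)" by (intro smooth_mult smooth_const)
  then show ?thesis by simp
qed

lemma smooth_diff[intro]: "open U \<Longrightarrow> smooth_on U f \<Longrightarrow> smooth_on U g \<Longrightarrow> smooth_on U (\<lambda>x. f x - g x)"
proof -
  assume "open U" "smooth_on U f" "smooth_on U g"
  then have "smooth_on U (\<lambda>x. f x + - g x)" by (intro smooth_add smooth_minus)
  then show ?thesis by simp
qed

lemma smooth_pd[intro]: "smooth_on U f \<Longrightarrow> smooth_on U (pd i f)"
  unfolding smooth_on_def by (metis Ck.simps(2))

lemma smooth_eta: "smooth_on U f \<Longrightarrow> smooth_on U (\<lambda>x. f x)" by simp

lemma four_eq_zero: "(4::4) = 0" by simp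

lemma sum4: "sum f (UNIV::4 set) = f 0 + f 1 + f 2 + f 3"
  unfolding sum_4 four_eq_zero by (simp add: ac_simps)

lemma all4: "(\<forall>i::4. P i) \<longleftrightarrow> P 0 \<and> P 1 \<and> P 2 \<and> P 3"
  unfolding forall_4 four_eq_zero by blast

definition rhoM :: "real \<Rightarrow> real \<Rightarrow> real \<Rightarrow> real \<Rightarrow> real^4^4" where
"rhoM a b c d = (\<chi> i j.
  if i = 0 then (if j = 0 then a^3 else if j = 1 then a^2*c else if j = 2 then a*c^2 else c^3)
  else if i = 1 then (if j = 0 then 3*a^2*b else if j = 1 then a^2*d + 2*a*b*c else if j = 2 then b*c^2 + 2*a*c*d else 3*c^2*d)
  else if i = 2 then (if j = 0 then 3*a*b^2 else if j = 1 then 2*a*b*d + b^2*c else if j = 2 then a*d^2 + 2*b*c*d else 3*c*d^2)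
  else (if j = 0 then b^3 else if j = 1 then b^2*d else if j = 2 then b*d^2 else d^3))"

lemma rhoM_cubic: "cubic (rhoM a b c d *v v) x y = cubic v (a*x+b*y) (c*x+d*y)"
  unfolding cubic_def matrix_vector_mult_def
  by (simp add: sum4 rhoM_def) algebra

lemma cubic_eq_imp:
  assumes "\<forall>x y. cubic w x y = cubic u x y"
  shows "w = u"
proof -
  have 1: "cubic w 1 0 = cubic u 1 0" and 2: "cubic w 0 1 = cubic u 0 1"
    and 3: "cubic w 1 1 = cubic u 1 1" and 4: "cubic w 1 (-1) = cubic u 1 (-1)"
    using assms by blast+
  then show ?thesis unfolding cubic_def vec_eq_iff all4 by simp
qed

lemma G3_rho: "M \<in> G3 \<Longrightarrow> \<exists>a b c d. M = rhoM a b c d"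
proof -
  assume "M \<in> G3"
  then obtain a b c d where H: "\<forall>v x y. cubic (M *v v) x y = cubic v (a * x + b * y) (c * x + d * y)"
    unfolding G3_def by blast
  have "\<forall>v. M *v v = rhoM a b c d *v v"
    using H rhoM_cubic cubic_eq_imp by metis
  then show ?thesis using matrix_eq by blast
qed

lemma rho_G3: "a*d - b*c \<noteq> 0 \<Longrightarrow> rhoM a b c d \<in> G3"
  unfolding G3_def using rhoM_cubic by blast

definition gcon :: "real^4^4 \<Rightarrow> bool" where
"gcon X \<longleftrightarrow> X$0$2 = 0 \<and> X$0$3 = 0 \<and> X$1$3 = 0 \<and> X$2$0 = 0 \<and> X$3$0 = 0 \<and> X$3$1 = 0 \<and>
   X$1$2 = 2*X$0$1 \<and> X$2$3 = 3*X$0$1 \<and> X$1$0 = 3*X$3$2 \<and> X$2$1 = 2*X$3$2 \<and>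
   X$1$1 = (2*X$0$0 + X$3$3)/3 \<and> X$2$2 = (X$0$0 + 2*X$3$3)/3"

lemma comp_deriv:
  fixes g :: "real \<Rightarrow> real^4^4"
  assumes "(g has_vector_derivative X) (at t0)"
  shows "((\<lambda>t. g t $ i $ j) has_real_derivative X $ i $ j) (at t0)"
proof -
  have bl: "bounded_linear (\<lambda>M::real^4^4. M $ i $ j)"
    by (rule bounded_linear_compose[OF bounded_linear_vec_nth bounded_linear_vec_nth])
  have "(g has_derivative (\<lambda>h. h *\<^sub>R X)) (at t0)" using assms by (simp add: has_vector_derivative_def)
  from bounded_linear.has_derivative[OF bl this]
  have "((\<lambda>t. g t $ i $ j) has_derivative (\<lambda>x. x * X$i$j)) (at t0)" by simp
  moreover have "(\<lambda>x. x * X$i$j) = (*) (X$i$j)" by (rule ext) (simp add: mult.commute)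
  ultimately show ?thesis by (simp add: has_field_derivative_def)
qed

lemma vd_comp:
  fixes G :: "real \<Rightarrow> real^4^4"
  assumes "\<And>i j. ((\<lambda>t. G t $ i $ j) has_real_derivative X $ i $ j) (at t0)"
  shows "(G has_vector_derivative X) (at t0)"
proof -
  have e: "(\<lambda>x. x * X$i$j) = (*) (X$i$j)" for i j by (rule ext) (simp add: mult.commute)
  have D: "((\<lambda>t. G t $ i $ j) has_derivative (\<lambda>x. x * X$i$j)) (at t0)" for i j
    using assms[of i j] unfolding has_field_derivative_def e .
  show ?thesis
    unfolding has_vector_derivative_def
  proof (subst has_derivative_componentwise_within, intro ballI)
    fix b :: "real^4^4" assume "b \<in> Basis"
    then obtain i u where b: "b = axis i u" and u: "u \<in> (Basis :: (real^4) set)"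
      by (auto simp: Basis_vec_def)
    then obtain j where u: "u = axis j 1" by (auto simp: Basis_vec_def)
    have 1: "(\<lambda>x. G x \<bullet> b) = (\<lambda>x. G x$i$j)" by (simp add: b u inner_axis)
    have 2: "(\<lambda>x. (x *\<^sub>R X) \<bullet> b) = (\<lambda>x. x * X$i$j)" by (simp add: b u inner_axis)
    show "((\<lambda>x. G x \<bullet> b) has_derivative (\<lambda>x. (x *\<^sub>R X) \<bullet> b)) (at t0)"
      unfolding 1 2 by (rule D)
  qed
qed

lemma rel_lin:
  fixes g :: "real \<Rightarrow> real^4^4"
  assumes D: "\<And>i j. ((\<lambda>t. g t $ i $ j) has_real_derivative X $ i $ j) (at 0)"
    and g0: "g 0 = mat 1"
    and R: "\<forall>t. c1 * (g t$i1$j1 * g t$k1$l1) + c2 * (g t$i2$j2 * g t$k2$l2)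
              + c3 * (g t$i3$j3 * g t$k3$l3) + c4 * (g t$i4$j4 * g t$k4$l4) = 0"
  shows "c1 * (X$i1$j1 * mat 1$k1$l1 + mat 1$i1$j1 * X$k1$l1)
       + c2 * (X$i2$j2 * mat 1$k2$l2 + mat 1$i2$j2 * X$k2$l2)
       + c3 * (X$i3$j3 * mat 1$k3$l3 + mat 1$i3$j3 * X$k3$l3)
       + c4 * (X$i4$j4 * mat 1$k4$l4 + mat 1$i4$j4 * X$k4$l4) = 0"
proof -
  have P: "((\<lambda>t. g t$i$j * g t$k$l) has_real_derivative (X$i$j * mat 1$k$l + mat 1$i$j * X$k$l)) (at 0)" for i j k l
    using DERIV_mult[OF D[of i j] D[of k l]] g0 by (simp add: ac_simps)
  have "((\<lambda>t. c1 * (g t$i1$j1 * g t$k1$l1) + c2 * (g t$i2$j2 * g t$k2$l2)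
              + c3 * (g t$i3$j3 * g t$k3$l3) + c4 * (g t$i4$j4 * g t$k4$l4)) has_real_derivative
        c1 * (X$i1$j1 * mat 1$k1$l1 + mat 1$i1$j1 * X$k1$l1)
       + c2 * (X$i2$j2 * mat 1$k2$l2 + mat 1$i2$j2 * X$k2$l2)
       + c3 * (X$i3$j3 * mat 1$k3$l3 + mat 1$i3$j3 * X$k3$l3)
       + c4 * (X$i4$j4 * mat 1$k4$l4 + mat 1$i4$j4 * X$k4$l4)) (at 0)"
    by (intro DERIV_add DERIV_cmult P)
  moreover have "(\<lambda>t. c1 * (g t$i1$j1 * g t$k1$l1) + c2 * (g t$i2$j2 * g t$k2$l2)
              + c3 * (g t$i3$j3 * g t$k3$l3) + c4 * (g t$i4$j4 * g t$k4$l4)) = (\<lambda>t. 0)"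
    by (rule ext) (use R in blast)
  ultimately have "((\<lambda>t. 0) has_real_derivative
        c1 * (X$i1$j1 * mat 1$k1$l1 + mat 1$i1$j1 * X$k1$l1)
       + c2 * (X$i2$j2 * mat 1$k2$l2 + mat 1$i2$j2 * X$k2$l2)
       + c3 * (X$i3$j3 * mat 1$k3$l3 + mat 1$i3$j3 * X$k3$l3)
       + c4 * (X$i4$j4 * mat 1$k4$l4 + mat 1$i4$j4 * X$k4$l4)) (at 0)" by simp
  from DERIV_unique[OF this DERIV_const] show ?thesis .
qed

lemma rho_rels:
  fixes M :: "real^4^4"
  assumes "M = rhoM a b c d"
  shows "M$0$1 * M$0$1 - M$0$0 * M$0$2 = 0"
    "M$0$1 * M$0$2 - M$0$0 * M$0$3 = 0"
    "M$1$0 * M$1$0 - 3 * (M$0$0 * M$2$0) = 0"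
    "M$2$3 * M$2$3 - 3 * (M$1$3 * M$3$3) = 0"
    "M$3$1 * M$3$2 - M$3$0 * M$3$3 = 0"
    "M$3$2 * M$3$2 - M$3$1 * M$3$3 = 0"
    "M$0$0 * M$1$2 - 2 * (M$0$1 * M$1$1) + M$0$2 * M$1$0 = 0"
    "M$2$1 * M$3$3 - 2 * (M$2$2 * M$3$2) + M$2$3 * M$3$1 = 0"
    "M$1$1 * M$2$3 - 3 * (M$0$1 * M$3$3) - 6 * (M$0$2 * M$3$2) = 0"
    "M$1$0 * M$2$2 - 3 * (M$0$0 * M$3$2) - 6 * (M$0$1 * M$3$1) = 0"
    "M$1$1 * M$1$1 - M$0$0 * M$2$2 - M$0$1 * M$2$1 - M$0$2 * M$2$0 = 0"
    "M$2$2 * M$2$2 - M$1$1 * M$3$3 - M$1$2 * M$3$2 - M$1$3 * M$3$1 = 0"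
  unfolding assms by (simp_all add: rhoM_def) algebra+


lemma mat1_nth: "mat 1 $ i $ j = (if i = j then (1::real) else 0)"
  by (simp add: mat_def)

lemma g3_gcon:
  assumes "X \<in> g3"
  shows "gcon X"
proof -
  obtain g where g0: "g 0 = mat 1" and G: "\<forall>t. g t \<in> G3" and D: "(g has_vector_derivative X) (at 0)"
    using assms unfolding g3_def by blast
  have Dc: "\<And>i j. ((\<lambda>t. g t $ i $ j) has_real_derivative X $ i $ j) (at 0)"
    using comp_deriv[OF D] .
  have R: "\<forall>t. (g t)$0$1 * (g t)$0$1 - (g t)$0$0 * (g t)$0$2 = 0 \<and>
    (g t)$0$1 * (g t)$0$2 - (g t)$0$0 * (g t)$0$3 = 0 \<and>
    (g t)$1$0 * (g t)$1$0 - 3 * ((g t)$0$0 * (g t)$2$0) = 0 \<and>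
    (g t)$2$3 * (g t)$2$3 - 3 * ((g t)$1$3 * (g t)$3$3) = 0 \<and>
    (g t)$3$1 * (g t)$3$2 - (g t)$3$0 * (g t)$3$3 = 0 \<and>
    (g t)$3$2 * (g t)$3$2 - (g t)$3$1 * (g t)$3$3 = 0 \<and>
    (g t)$0$0 * (g t)$1$2 - 2 * ((g t)$0$1 * (g t)$1$1) + (g t)$0$2 * (g t)$1$0 = 0 \<and>
    (g t)$2$1 * (g t)$3$3 - 2 * ((g t)$2$2 * (g t)$3$2) + (g t)$2$3 * (g t)$3$1 = 0 \<and>
    (g t)$1$1 * (g t)$2$3 - 3 * ((g t)$0$1 * (g t)$3$3) - 6 * ((g t)$0$2 * (g t)$3$2) = 0 \<and>
    (g t)$1$0 * (g t)$2$2 - 3 * ((g t)$0$0 * (g t)$3$2) - 6 * ((g t)$0$1 * (g t)$3$1) = 0 \<and>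
    (g t)$1$1 * (g t)$1$1 - (g t)$0$0 * (g t)$2$2 - (g t)$0$1 * (g t)$2$1 - (g t)$0$2 * (g t)$2$0 = 0 \<and>
    (g t)$2$2 * (g t)$2$2 - (g t)$1$1 * (g t)$3$3 - (g t)$1$2 * (g t)$3$2 - (g t)$1$3 * (g t)$3$1 = 0"
  proof
    fix t
    obtain a b c d where "g t = rhoM a b c d" using G G3_rho by blast
    from rho_rels[OF this] show "(g t)$0$1 * (g t)$0$1 - (g t)$0$0 * (g t)$0$2 = 0 \<and>
    (g t)$0$1 * (g t)$0$2 - (g t)$0$0 * (g t)$0$3 = 0 \<and>
    (g t)$1$0 * (g t)$1$0 - 3 * ((g t)$0$0 * (g t)$2$0) = 0 \<and>
    (g t)$2$3 * (g t)$2$3 - 3 * ((g t)$1$3 * (g t)$3$3) = 0 \<and>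
    (g t)$3$1 * (g t)$3$2 - (g t)$3$0 * (g t)$3$3 = 0 \<and>
    (g t)$3$2 * (g t)$3$2 - (g t)$3$1 * (g t)$3$3 = 0 \<and>
    (g t)$0$0 * (g t)$1$2 - 2 * ((g t)$0$1 * (g t)$1$1) + (g t)$0$2 * (g t)$1$0 = 0 \<and>
    (g t)$2$1 * (g t)$3$3 - 2 * ((g t)$2$2 * (g t)$3$2) + (g t)$2$3 * (g t)$3$1 = 0 \<and>
    (g t)$1$1 * (g t)$2$3 - 3 * ((g t)$0$1 * (g t)$3$3) - 6 * ((g t)$0$2 * (g t)$3$2) = 0 \<and>
    (g t)$1$0 * (g t)$2$2 - 3 * ((g t)$0$0 * (g t)$3$2) - 6 * ((g t)$0$1 * (g t)$3$1) = 0 \<and>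
    (g t)$1$1 * (g t)$1$1 - (g t)$0$0 * (g t)$2$2 - (g t)$0$1 * (g t)$2$1 - (g t)$0$2 * (g t)$2$0 = 0 \<and>
    (g t)$2$2 * (g t)$2$2 - (g t)$1$1 * (g t)$3$3 - (g t)$1$2 * (g t)$3$2 - (g t)$1$3 * (g t)$3$1 = 0"
      by blast
  qed
  note RL = rel_lin[OF Dc g0]
  have L0: "X$0$2 = 0" using RL[of "1" 0 1 0 1 "-1" 0 0 0 2 "0" 0 0 0 0 "0" 0 0 0 0] R by (simp add: mat1_nth algebra_simps)
  have L1: "X$0$3 = 0" using RL[of "1" 0 1 0 2 "-1" 0 0 0 3 "0" 0 0 0 0 "0" 0 0 0 0] R by (simp add: mat1_nth algebra_simps)
  have L2: "X$2$0 = 0" using RL[of "1" 1 0 1 0 "-3" 0 0 2 0 "0" 0 0 0 0 "0" 0 0 0 0] R by (simp add: mat1_nth algebra_simps)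
  have L3: "X$1$3 = 0" using RL[of "1" 2 3 2 3 "-3" 1 3 3 3 "0" 0 0 0 0 "0" 0 0 0 0] R by (simp add: mat1_nth algebra_simps)
  have L4: "X$3$0 = 0" using RL[of "1" 3 1 3 2 "-1" 3 0 3 3 "0" 0 0 0 0 "0" 0 0 0 0] R by (simp add: mat1_nth algebra_simps)
  have L5: "X$3$1 = 0" using RL[of "1" 3 2 3 2 "-1" 3 1 3 3 "0" 0 0 0 0 "0" 0 0 0 0] R by (simp add: mat1_nth algebra_simps)
  have L6: "X$1$2 = 2*X$0$1" using RL[of "1" 0 0 1 2 "-2" 0 1 1 1 "1" 0 2 1 0 "0" 0 0 0 0] R by (simp add: mat1_nth algebra_simps)
  have L7: "X$2$1 = 2*X$3$2" using RL[of "1" 2 1 3 3 "-2" 2 2 3 2 "1" 2 3 3 1 "0" 0 0 0 0] R by (simp add: mat1_nth algebra_simps)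
  have L8: "X$2$3 = 3*X$0$1" using RL[of "1" 1 1 2 3 "-3" 0 1 3 3 "-6" 0 2 3 2 "0" 0 0 0 0] R by (simp add: mat1_nth algebra_simps)
  have L9: "X$1$0 = 3*X$3$2" using RL[of "1" 1 0 2 2 "-3" 0 0 3 2 "-6" 0 1 3 1 "0" 0 0 0 0] R by (simp add: mat1_nth algebra_simps)
  have L10: "2*X$1$1 = X$2$2 + X$0$0" using RL[of "1" 1 1 1 1 "-1" 0 0 2 2 "-1" 0 1 2 1 "-1" 0 2 2 0] R by (simp add: mat1_nth algebra_simps)
  have L11: "2*X$2$2 = X$3$3 + X$1$1" using RL[of "1" 2 2 2 2 "-1" 1 1 3 3 "-1" 1 2 3 2 "-1" 1 3 3 1] R by (simp add: mat1_nth algebra_simps)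
  show ?thesis unfolding gcon_def using L0 L1 L2 L3 L4 L5 L6 L7 L8 L9 L10 L11 by simp
qed


definition rhoD :: "real \<Rightarrow> real \<Rightarrow> real \<Rightarrow> real \<Rightarrow> real^4^4" where
"rhoD al be ga de = (\<chi> i j.
  if i = 0 then (if j = 0 then 3*al else if j = 1 then ga else 0)
  else if i = 1 then (if j = 0 then 3*be else if j = 1 then 2*al + de else if j = 2 then 2*ga else 0)
  else if i = 2 then (if j = 0 then 0 else if j = 1 then 2*be else if j = 2 then al + 2*de else 3*ga)
  else (if j = 0 then 0 else if j = 1 then 0 else if j = 2 then be else 3*de))"

lemma rho_deriv:
  "((\<lambda>t. rhoM (1+t*al) (t*be) (t*ga) (1+t*de) $ i $ j) has_real_derivative rhoD al be ga de $ i $ j) (at 0)"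
proof -
  have "\<forall>i j. ((\<lambda>t. rhoM (1+t*al) (t*be) (t*ga) (1+t*de) $ i $ j) has_real_derivative rhoD al be ga de $ i $ j) (at 0)"
    unfolding all4 by (simp add: rhoM_def rhoD_def) (auto intro!: derivative_eq_intros)
  then show ?thesis by blast
qed

lemma gcon_rhoD: "gcon X \<Longrightarrow> X = rhoD (X$0$0/3) (X$3$2) (X$0$1) (X$3$3/3)"
  unfolding gcon_def vec_eq_iff all4 by (simp add: rhoD_def)

lemma rho_id: "rhoM 1 0 0 1 = mat 1"
  unfolding vec_eq_iff all4 by (simp add: rhoM_def mat1_nth)

lemma gcon_g3:
  assumes "gcon X"
  shows "X \<in> g3"
proof -
  define al where "al = X$0$0/3"
  define be where "be = X$3$2"
  define ga where "ga = X$0$1"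
  define de where "de = X$3$3/3"
  have X: "X = rhoD al be ga de" unfolding al_def be_def ga_def de_def using gcon_rhoD[OF assms] .
  define dt where "dt t = (1+t*al)*(1+t*de) - (t*be)*(t*ga)" for t
  define g where "g t = (if dt t \<noteq> 0 then rhoM (1+t*al) (t*be) (t*ga) (1+t*de) else mat 1)" for t
  have g0: "g 0 = mat 1" unfolding g_def dt_def using rho_id by simp
  have G: "g t \<in> G3" for t
  proof (cases "dt t \<noteq> 0")
    case True
    then show ?thesis unfolding g_def dt_def by (simp add: rho_G3)
  next
    case False
    then show ?thesis unfolding g_def using rho_G3[of 1 1 0 0] rho_id by simp
  qed
  have D0: "((\<lambda>t. rhoM (1+t*al) (t*be) (t*ga) (1+t*de)) has_vector_derivative X) (at 0)"
    unfolding X by (rule vd_comp) (rule rho_deriv)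
  have op: "open {t. dt t \<noteq> 0}"
    unfolding dt_def by (rule open_Collect_neq) (intro continuous_intros)+
  have D: "(g has_vector_derivative X) (at 0)"
    by (rule has_vector_derivative_transform_within_open[OF D0 op]) (auto simp: g_def dt_def)
  show ?thesis unfolding g3_def using g0 G D by blast
qed

lemma g3_iff: "X \<in> g3 \<longleftrightarrow> gcon X"
  using g3_gcon gcon_g3 by blast

lemma fwd_point:
  fixes T :: "4 \<Rightarrow> real^4^4"
  assumes H: "\<forall>a j k. pd j (\<lambda>q. hmat A B C D q $ a $ k) p - pd k (\<lambda>q. hmat A B C D q $ a $ j) p
          = - (\<Sum>b\<in>UNIV. T j $ a $ b * hmat A B C D p $ b $ k - T k $ a $ b * hmat A B C D p $ b $ j)"
    and G: "\<forall>j. gcon (T j)"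
  shows "V2 A B D p - V3 A B C D B p - A p * V2 A B B p - C p * V2 A B A p + A p * V3 A B C D A p + (A p)^2 * V2 A B A p = 0 \<and> 2 * V1 A D p - V2 A B C p - 2 * A p * V1 A B p - V3 A B C D A p + A p * V2 A B A p + 2 * (A p)^2 * V1 A A p - 2 * C p * V1 A A p = 0 \<and> V0 D p - 2 * V1 A C p + 3 * V1 A B p - A p * V0 B p - 2 * V2 A B A p - A p * V1 A A p - C p * V0 A p + (A p)^2 * V0 A p = 0 \<and> V0 C p - 2 * V0 B p + V1 A A p + A p * V0 A p = 0"
proof -
  have "\<forall>j. \<exists>al be ga de. T j = rhoD al be ga de" using G gcon_rhoD by blast
  then obtain al be ga de where TT: "\<And>j. T j = rhoD (al j) (be j) (ga j) (de j)" by metis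
  have c0: "V2 A B D p - V3 A B C D B p - A p * V2 A B B p - C p * V2 A B A p + A p * V3 A B C D A p + (A p)^2 * V2 A B A p = 0"
  proof -
    have "V2 A B D p - V3 A B C D B p - A p * V2 A B B p - C p * V2 A B A p + A p * V3 A B C D A p + (A p)^2 * V2 A B A p = ((-1) * (A p) * (D p) + (B p) * (C p)) * (pd 0 (\<lambda>q. hmat A B C D q $ 0 $ 1) p - pd 1 (\<lambda>q. hmat A B C D q $ 0 $ 0) p) + ((-1) * (A p) * (C p) + (D p)) * (pd 0 (\<lambda>q. hmat A B C D q $ 0 $ 2) p - pd 2 (\<lambda>q. hmat A B C D q $ 0 $ 0) p) + ((A p)^2 + (-1) * (B p)) * (pd 0 (\<lambda>q. hmat A B C D q $ 0 $ 3) p - pd 3 (\<lambda>q. hmat A B C D q $ 0 $ 0) p) + ((C p)) * (pd 1 (\<lambda>q. hmat A B C D q $ 0 $ 2) p - pd 2 (\<lambda>q. hmat A B C D q $ 0 $ 1) p) + ((-1) * (A p)) * (pd 1 (\<lambda>q. hmat A B C D q $ 0 $ 3) p - pd 3 (\<lambda>q. hmat A B C D q $ 0 $ 1) p) + (1) * (pd 2 (\<lambda>q. hmat A B C D q $ 0 $ 3) p - pd 3 (\<lambda>q. hmat A B C D q $ 0 $ 2) p)"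
      unfolding V0_def V1_def V2_def V3_def by (simp add: hmat_def; algebra)
    also have "\<dots> = ((-1) * (A p) * (D p) + (B p) * (C p)) * (- (\<Sum>b\<in>UNIV. T 0 $ 0 $ b * hmat A B C D p $ b $ 1 - T 1 $ 0 $ b * hmat A B C D p $ b $ 0)) + ((-1) * (A p) * (C p) + (D p)) * (- (\<Sum>b\<in>UNIV. T 0 $ 0 $ b * hmat A B C D p $ b $ 2 - T 2 $ 0 $ b * hmat A B C D p $ b $ 0)) + ((A p)^2 + (-1) * (B p)) * (- (\<Sum>b\<in>UNIV. T 0 $ 0 $ b * hmat A B C D p $ b $ 3 - T 3 $ 0 $ b * hmat A B C D p $ b $ 0)) + ((C p)) * (- (\<Sum>b\<in>UNIV. T 1 $ 0 $ b * hmat A B C D p $ b $ 2 - T 2 $ 0 $ b * hmat A B C D p $ b $ 1)) + ((-1) * (A p)) * (- (\<Sum>b\<in>UNIV. T 1 $ 0 $ b * hmat A B C D p $ b $ 3 - T 3 $ 0 $ b * hmat A B C D p $ b $ 1)) + (1) * (- (\<Sum>b\<in>UNIV. T 2 $ 0 $ b * hmat A B C D p $ b $ 3 - T 3 $ 0 $ b * hmat A B C D p $ b $ 2))"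
      by (simp only: H[rule_format])
    also have "\<dots> = 0"
      by (simp add: sum4 hmat_def TT rhoD_def; algebra)
    finally show ?thesis .
  qed
  have c1: "2 * V1 A D p - V2 A B C p - 2 * A p * V1 A B p - V3 A B C D A p + A p * V2 A B A p + 2 * (A p)^2 * V1 A A p - 2 * C p * V1 A A p = 0"
  proof -
    have "2 * V1 A D p - V2 A B C p - 2 * A p * V1 A B p - V3 A B C D A p + A p * V2 A B A p + 2 * (A p)^2 * V1 A A p - 2 * C p * V1 A A p = ((-2) * (A p) * (B p) + 2 * (D p)) * (pd 0 (\<lambda>q. hmat A B C D q $ 0 $ 1) p - pd 1 (\<lambda>q. hmat A B C D q $ 0 $ 0) p) + (2 * (A p)^2) * (pd 0 (\<lambda>q. hmat A B C D q $ 0 $ 2) p - pd 2 (\<lambda>q. hmat A B C D q $ 0 $ 0) p) + ((-2) * (A p)) * (pd 0 (\<lambda>q. hmat A B C D q $ 0 $ 3) p - pd 3 (\<lambda>q. hmat A B C D q $ 0 $ 0) p) + ((-2) * (A p)) * (pd 1 (\<lambda>q. hmat A B C D q $ 0 $ 2) p - pd 2 (\<lambda>q. hmat A B C D q $ 0 $ 1) p) + (2) * (pd 1 (\<lambda>q. hmat A B C D q $ 0 $ 3) p - pd 3 (\<lambda>q. hmat A B C D q $ 0 $ 1) p) + ((A p) * (D p) + (-1) * (B p) * (C p)) * (pd 0 (\<lambda>q. hmat A B C D q $ 1 $ 1) p - pd 1 (\<lambda>q. hmat A B C D q $ 1 $ 0) p) + ((A p) * (C p) + (-1) * (D p)) *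 (pd 0 (\<lambda>q. hmat A B C D q $ 1 $ 2) p - pd 2 (\<lambda>q. hmat A B C D q $ 1 $ 0) p) + ((-1) * (A p)^2 + (B p)) * (pd 0 (\<lambda>q. hmat A B C D q $ 1 $ 3) p - pd 3 (\<lambda>q. hmat A B C D q $ 1 $ 0) p) + ((-1) * (C p)) * (pd 1 (\<lambda>q. hmat A B C D q $ 1 $ 2) p - pd 2 (\<lambda>q. hmat A B C D q $ 1 $ 1) p) + ((A p)) * (pd 1 (\<lambda>q. hmat A B C D q $ 1 $ 3) p - pd 3 (\<lambda>q. hmat A B C D q $ 1 $ 1) p) + ((-1)) * (pd 2 (\<lambda>q. hmat A B C D q $ 1 $ 3) p - pd 3 (\<lambda>q. hmat A B C D q $ 1 $ 2) p)"
      unfolding V0_def V1_def V2_def V3_def by (simp add: hmat_def; algebra)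
    also have "\<dots> = ((-2) * (A p) * (B p) + 2 * (D p)) * (- (\<Sum>b\<in>UNIV. T 0 $ 0 $ b * hmat A B C D p $ b $ 1 - T 1 $ 0 $ b * hmat A B C D p $ b $ 0)) + (2 * (A p)^2) * (- (\<Sum>b\<in>UNIV. T 0 $ 0 $ b * hmat A B C D p $ b $ 2 - T 2 $ 0 $ b * hmat A B C D p $ b $ 0)) + ((-2) * (A p)) * (- (\<Sum>b\<in>UNIV. T 0 $ 0 $ b * hmat A B C D p $ b $ 3 - T 3 $ 0 $ b * hmat A B C D p $ b $ 0)) + ((-2) * (A p)) * (- (\<Sum>b\<in>UNIV. T 1 $ 0 $ b * hmat A B C D p $ b $ 2 - T 2 $ 0 $ b * hmat A B C D p $ b $ 1)) + (2) * (- (\<Sum>b\<in>UNIV. T 1 $ 0 $ b * hmat A B C D p $ b $ 3 - T 3 $ 0 $ b * hmat A B C D p $ b $ 1)) + ((A p) * (D p) + (-1) * (B p) * (C p)) * (- (\<Sum>b\<in>UNIV. T 0 $ 1 $ b * hmat A B C D p $ b $ 1 - T 1 $ 1 $ b * hmat A B C D p $ b $ 0)) + ((A p) * (C p) + (-1) * (D p)) * (- (\<Sum>b\<in>UNIV. T 0 $ 1 $ b * hmat A B C D p $ b $ 2 - T 2 $ 1 $ b * hmat A B C D p $ b $ 0)) + ((-1) * (A p)^2 + (B p)) * (- (\<Sum>b\<in>UNIV. T 0 $ 1 $ b * hmat A B C D p $ b $ 3 - T 3 $ 1 $ b * hmat A B C D p $ b $ 0)) + ((-1) * (C p)) * (-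 (\<Sum>b\<in>UNIV. T 1 $ 1 $ b * hmat A B C D p $ b $ 2 - T 2 $ 1 $ b * hmat A B C D p $ b $ 1)) + ((A p)) * (- (\<Sum>b\<in>UNIV. T 1 $ 1 $ b * hmat A B C D p $ b $ 3 - T 3 $ 1 $ b * hmat A B C D p $ b $ 1)) + ((-1)) * (- (\<Sum>b\<in>UNIV. T 2 $ 1 $ b * hmat A B C D p $ b $ 3 - T 3 $ 1 $ b * hmat A B C D p $ b $ 2))"
      by (simp only: H[rule_format])
    also have "\<dots> = 0"
      by (simp add: sum4 hmat_def TT rhoD_def; algebra)
    finally show ?thesis .
  qed
  have c2: "V0 D p - 2 * V1 A C p + 3 * V1 A B p - A p * V0 B p - 2 * V2 A B A p - A p * V1 A A p - C p * V0 A p + (A p)^2 * V0 A p = 0"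
  proof -
    have "V0 D p - 2 * V1 A C p + 3 * V1 A B p - A p * V0 B p - 2 * V2 A B A p - A p * V1 A A p - C p * V0 A p + (A p)^2 * V0 A p = ((A p)^2 + 3 * (B p) + (-1) * (C p)) * (pd 0 (\<lambda>q. hmat A B C D q $ 0 $ 1) p - pd 1 (\<lambda>q. hmat A B C D q $ 0 $ 0) p) + ((-4) * (A p)) * (pd 0 (\<lambda>q. hmat A B C D q $ 0 $ 2) p - pd 2 (\<lambda>q. hmat A B C D q $ 0 $ 0) p) + (1) * (pd 0 (\<lambda>q. hmat A B C D q $ 0 $ 3) p - pd 3 (\<lambda>q. hmat A B C D q $ 0 $ 0) p) + (3) * (pd 1 (\<lambda>q. hmat A B C D q $ 0 $ 2) p - pd 2 (\<lambda>q. hmat A B C D q $ 0 $ 1) p) + (2 * (A p) * (B p) + (-2) * (D p)) * (pd 0 (\<lambda>q. hmat A B C D q $ 1 $ 1) p - pd 1 (\<lambda>q. hmat A B C D q $ 1 $ 0) p) + ((-2) * (A p)^2) * (pd 0 (\<lambda>q. hmat A B C D q $ 1 $ 2) p - pd 2 (\<lambda>q. hmat A B C D q $ 1 $ 0) p) + (2 * (A p)) * (pd 0 (\<lambda>q. hmat A B C D q $ 1 $ 3) p - pd 3 (\<lambda>q. hmat A B C D q $ 1 $ 0) p) + (2 * (A p)) * (pd 1 (\<lambda>q. hmat A B C D q $ 1 $ 2) p - pd 2 (\<lambda>q. hmat A B C D q $ 1 $ 1) p) + ((-2)) * (pd 1 (\<lambda>q. hmat A B C D q $ 1 $ 3) p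 - pd 3 (\<lambda>q. hmat A B C D q $ 1 $ 1) p) + ((-1) * (A p) * (D p) + (B p) * (C p)) * (pd 0 (\<lambda>q. hmat A B C D q $ 2 $ 1) p - pd 1 (\<lambda>q. hmat A B C D q $ 2 $ 0) p) + ((-1) * (A p) * (C p) + (D p)) * (pd 0 (\<lambda>q. hmat A B C D q $ 2 $ 2) p - pd 2 (\<lambda>q. hmat A B C D q $ 2 $ 0) p) + ((A p)^2 + (-1) * (B p)) * (pd 0 (\<lambda>q. hmat A B C D q $ 2 $ 3) p - pd 3 (\<lambda>q. hmat A B C D q $ 2 $ 0) p) + ((C p)) * (pd 1 (\<lambda>q. hmat A B C D q $ 2 $ 2) p - pd 2 (\<lambda>q. hmat A B C D q $ 2 $ 1) p) + ((-1) * (A p)) * (pd 1 (\<lambda>q. hmat A B C D q $ 2 $ 3) p - pd 3 (\<lambda>q. hmat A B C D q $ 2 $ 1) p) + (1) * (pd 2 (\<lambda>q. hmat A B C D q $ 2 $ 3) p - pd 3 (\<lambda>q. hmat A B C D q $ 2 $ 2) p)"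
      unfolding V0_def V1_def V2_def V3_def by (simp add: hmat_def; algebra)
    also have "\<dots> = ((A p)^2 + 3 * (B p) + (-1) * (C p)) * (- (\<Sum>b\<in>UNIV. T 0 $ 0 $ b * hmat A B C D p $ b $ 1 - T 1 $ 0 $ b * hmat A B C D p $ b $ 0)) + ((-4) * (A p)) * (- (\<Sum>b\<in>UNIV. T 0 $ 0 $ b * hmat A B C D p $ b $ 2 - T 2 $ 0 $ b * hmat A B C D p $ b $ 0)) + (1) * (- (\<Sum>b\<in>UNIV. T 0 $ 0 $ b * hmat A B C D p $ b $ 3 - T 3 $ 0 $ b * hmat A B C D p $ b $ 0)) + (3) * (- (\<Sum>b\<in>UNIV. T 1 $ 0 $ b * hmat A B C D p $ b $ 2 - T 2 $ 0 $ b * hmat A B C D p $ b $ 1)) + (2 * (A p) * (B p) + (-2) * (D p)) * (- (\<Sum>b\<in>UNIV. T 0 $ 1 $ b * hmat A B C D p $ b $ 1 - T 1 $ 1 $ b * hmat A B C D p $ b $ 0)) + ((-2) * (A p)^2) * (- (\<Sum>b\<in>UNIV. T 0 $ 1 $ b * hmat A B C D p $ b $ 2 - T 2 $ 1 $ b * hmat A B C D p $ b $ 0)) + (2 * (A p)) * (- (\<Sum>b\<in>UNIV. T 0 $ 1 $ b * hmat A B C D p $ b $ 3 - T 3 $ 1 $ b * hmat A B C D p $ b $ 0)) + (2 * (A p)) * (- (\<Sum>b\<in>UNIV. T 1 $ 1 $ b * hmat A B C D p $ b $ 2 - T 2 $ 1 $ b * hmat A B C D p $ b $ 1)) + ((-2))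 * (- (\<Sum>b\<in>UNIV. T 1 $ 1 $ b * hmat A B C D p $ b $ 3 - T 3 $ 1 $ b * hmat A B C D p $ b $ 1)) + ((-1) * (A p) * (D p) + (B p) * (C p)) * (- (\<Sum>b\<in>UNIV. T 0 $ 2 $ b * hmat A B C D p $ b $ 1 - T 1 $ 2 $ b * hmat A B C D p $ b $ 0)) + ((-1) * (A p) * (C p) + (D p)) * (- (\<Sum>b\<in>UNIV. T 0 $ 2 $ b * hmat A B C D p $ b $ 2 - T 2 $ 2 $ b * hmat A B C D p $ b $ 0)) + ((A p)^2 + (-1) * (B p)) * (- (\<Sum>b\<in>UNIV. T 0 $ 2 $ b * hmat A B C D p $ b $ 3 - T 3 $ 2 $ b * hmat A B C D p $ b $ 0)) + ((C p)) * (- (\<Sum>b\<in>UNIV. T 1 $ 2 $ b * hmat A B C D p $ b $ 2 - T 2 $ 2 $ b * hmat A B C D p $ b $ 1)) + ((-1) * (A p)) * (- (\<Sum>b\<in>UNIV. T 1 $ 2 $ b * hmat A B C D p $ b $ 3 - T 3 $ 2 $ b * hmat A B C D p $ b $ 1)) + (1) * (- (\<Sum>b\<in>UNIV. T 2 $ 2 $ b * hmat A B C D p $ b $ 3 - T 3 $ 2 $ b * hmat A B C D p $ b $ 2))"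
      by (simp only: H[rule_format])
    also have "\<dots> = 0"
      by (simp add: sum4 hmat_def TT rhoD_def; algebra)
    finally show ?thesis .
  qed
  have c3: "V0 C p - 2 * V0 B p + V1 A A p + A p * V0 A p = 0"
  proof -
    have "V0 C p - 2 * V0 B p + V1 A A p + A p * V0 A p = (2 * (A p)) * (pd 0 (\<lambda>q. hmat A B C D q $ 0 $ 1) p - pd 1 (\<lambda>q. hmat A B C D q $ 0 $ 0) p) + ((-2)) * (pd 0 (\<lambda>q. hmat A B C D q $ 0 $ 2) p - pd 2 (\<lambda>q. hmat A B C D q $ 0 $ 0) p) + ((A p)^2 + 3 * (B p) + (-1) * (C p)) * (pd 0 (\<lambda>q. hmat A B C D q $ 1 $ 1) p - pd 1 (\<lambda>q. hmat A B C D q $ 1 $ 0) p) + ((-4) * (A p)) * (pd 0 (\<lambda>q. hmat A B C D q $ 1 $ 2) p - pd 2 (\<lambda>q. hmat A B C D q $ 1 $ 0) p) + (1) * (pd 0 (\<lambda>q. hmat A B C D q $ 1 $ 3) p - pd 3 (\<lambda>q. hmat A B C D q $ 1 $ 0) p) + (3) * (pd 1 (\<lambda>q. hmat A B C D q $ 1 $ 2) p - pd 2 (\<lambda>q. hmat A B C D q $ 1 $ 1) p) + (2 * (A p) * (B p) + (-2) * (D p)) * (pd 0 (\<lambda>q. hmat A B C D q $ 2 $ 1) p - pd 1 (\<lambda>q. hmat A B C D q $ 2 $ 0) p) + ((-2) * (A p)^2) * (pd 0 (\<lambda>q. hmat A B C D q $ 2 $ 2) p - pd 2 (\<lambda>q.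 hmat A B C D q $ 2 $ 0) p) + (2 * (A p)) * (pd 0 (\<lambda>q. hmat A B C D q $ 2 $ 3) p - pd 3 (\<lambda>q. hmat A B C D q $ 2 $ 0) p) + (2 * (A p)) * (pd 1 (\<lambda>q. hmat A B C D q $ 2 $ 2) p - pd 2 (\<lambda>q. hmat A B C D q $ 2 $ 1) p) + ((-2)) * (pd 1 (\<lambda>q. hmat A B C D q $ 2 $ 3) p - pd 3 (\<lambda>q. hmat A B C D q $ 2 $ 1) p) + ((-1) * (A p) * (D p) + (B p) * (C p)) * (pd 0 (\<lambda>q. hmat A B C D q $ 3 $ 1) p - pd 1 (\<lambda>q. hmat A B C D q $ 3 $ 0) p) + ((-1) * (A p) * (C p) + (D p)) * (pd 0 (\<lambda>q. hmat A B C D q $ 3 $ 2) p - pd 2 (\<lambda>q. hmat A B C D q $ 3 $ 0) p) + ((A p)^2 + (-1) * (B p)) * (pd 0 (\<lambda>q. hmat A B C D q $ 3 $ 3) p - pd 3 (\<lambda>q. hmat A B C D q $ 3 $ 0) p) + ((C p)) * (pd 1 (\<lambda>q. hmat A B C D q $ 3 $ 2) p - pd 2 (\<lambda>q. hmat A B C D q $ 3 $ 1) p) + ((-1) * (A p)) * (pd 1 (\<lambda>q. hmat A B C D q $ 3 $ 3) p - pd 3 (\<lambda>q. hmat A B C D q $ 3 $ 1) p) + (1) * (pd 2 (\<lambda>q. hmat A B C D q $ 3 $ 3) p - pd 3 (\<lambda>q. hmat A B C D q $ 3 $ 2) p)"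
      unfolding V0_def V1_def V2_def V3_def by (simp add: hmat_def; algebra)
    also have "\<dots> = (2 * (A p)) * (- (\<Sum>b\<in>UNIV. T 0 $ 0 $ b * hmat A B C D p $ b $ 1 - T 1 $ 0 $ b * hmat A B C D p $ b $ 0)) + ((-2)) * (- (\<Sum>b\<in>UNIV. T 0 $ 0 $ b * hmat A B C D p $ b $ 2 - T 2 $ 0 $ b * hmat A B C D p $ b $ 0)) + ((A p)^2 + 3 * (B p) + (-1) * (C p)) * (- (\<Sum>b\<in>UNIV. T 0 $ 1 $ b * hmat A B C D p $ b $ 1 - T 1 $ 1 $ b * hmat A B C D p $ b $ 0)) + ((-4) * (A p)) * (- (\<Sum>b\<in>UNIV. T 0 $ 1 $ b * hmat A B C D p $ b $ 2 - T 2 $ 1 $ b * hmat A B C D p $ b $ 0)) + (1) * (- (\<Sum>b\<in>UNIV. T 0 $ 1 $ b * hmat A B C D p $ b $ 3 - T 3 $ 1 $ b * hmat A B C D p $ b $ 0)) + (3) * (- (\<Sum>b\<in>UNIV. T 1 $ 1 $ b * hmat A B C D p $ b $ 2 - T 2 $ 1 $ b * hmat A B C D p $ b $ 1)) + (2 * (A p) * (B p) + (-2) * (D p)) * (- (\<Sum>b\<in>UNIV. T 0 $ 2 $ b * hmat A B C D p $ b $ 1 - T 1 $ 2 $ b * hmat A B C D p $ b $ 0)) + ((-2) * (A p)^2) * (- (\<Sum>b\<in>UNIV. T 0 $ 2 $ b * hmat A B C D p $ b $ 2 - T 2 $ 2 $ b * hmat A B C D p $ b $ 0)) + (2 * (A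 p)) * (- (\<Sum>b\<in>UNIV. T 0 $ 2 $ b * hmat A B C D p $ b $ 3 - T 3 $ 2 $ b * hmat A B C D p $ b $ 0)) + (2 * (A p)) * (- (\<Sum>b\<in>UNIV. T 1 $ 2 $ b * hmat A B C D p $ b $ 2 - T 2 $ 2 $ b * hmat A B C D p $ b $ 1)) + ((-2)) * (- (\<Sum>b\<in>UNIV. T 1 $ 2 $ b * hmat A B C D p $ b $ 3 - T 3 $ 2 $ b * hmat A B C D p $ b $ 1)) + ((-1) * (A p) * (D p) + (B p) * (C p)) * (- (\<Sum>b\<in>UNIV. T 0 $ 3 $ b * hmat A B C D p $ b $ 1 - T 1 $ 3 $ b * hmat A B C D p $ b $ 0)) + ((-1) * (A p) * (C p) + (D p)) * (- (\<Sum>b\<in>UNIV. T 0 $ 3 $ b * hmat A B C D p $ b $ 2 - T 2 $ 3 $ b * hmat A B C D p $ b $ 0)) + ((A p)^2 + (-1) * (B p)) * (- (\<Sum>b\<in>UNIV. T 0 $ 3 $ b * hmat A B C D p $ b $ 3 - T 3 $ 3 $ b * hmat A B C D p $ b $ 0)) + ((C p)) * (- (\<Sum>b\<in>UNIV. T 1 $ 3 $ b * hmat A B C D p $ b $ 2 - T 2 $ 3 $ b * hmat A B C D p $ b $ 1)) + ((-1) * (A p)) * (- (\<Sum>b\<in>UNIV. T 1 $ 3 $ b * hmat A B C D p $ b $ 3 - T 3 $ 3 $ b * hmat A B C D p $ b $ 1)) + (1) * (- (\<Sum>b\<in>UNIV. T 2 $ 3 $ b * hmat A B C D p $ b $ 3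 - T 3 $ 3 $ b * hmat A B C D p $ b $ 2))"
      by (simp only: H[rule_format])
    also have "\<dots> = 0"
      by (simp add: sum4 hmat_def TT rhoD_def; algebra)
    finally show ?thesis .
  qed
  show ?thesis using c0 c1 c2 c3 by blast
qed
definition TH :: "(real^4 \<Rightarrow> real) \<Rightarrow> (real^4 \<Rightarrow> real) \<Rightarrow> (real^4 \<Rightarrow> real) \<Rightarrow> (real^4 \<Rightarrow> real) \<Rightarrow> real^4 \<Rightarrow> 4 \<Rightarrow> real^4^4" where
"TH A B C D p j = (if j = 0 then rhoD 0 0 ((-1/3) * (pd 0 A p)) 0 else if j = 1 then rhoD ((2/9) * (pd 0 A p)) 0 ((-2/9) * (pd 0 A p) * (A p) + (-1/3) * (pd 1 A p) + (2/9) * (pd 0 C p)) 0 else if j = 2 then rhoD ((-1/9) * (pd 0 A p) * (A p) + (1/3) * (pd 0 B p)) ((1/9) * (pd 0 A p)) ((1/9) * (pd 0 A p) * (A p)^2 + (2/3) * (pd 0 A p) * (B p) + (-1/3) * (pd 1 A p) * (A p) + (-1) * (pd 2 A p) + (-1) * (pd 0 B p) * (A p) + (pd 1 B p) + (2/9) * (pd 0 C p) * (A p)) ((-1/9) * (pd 0 A p) * (A p) + (1/3) * (pd 1 A p) + (-2/3) * (pd 0 B p) + (4/9) * (pd 0 C p)) else rhoD ((-1/9) * (pd 0 A p) * (C p) + (1/3) * (pd 0 D p)) ((-2/9) * (pd 0 A p) * (A p) + (1/3) * (pd 0 C p)) ((1/9) * (pd 0 A p) * (A p) * (C p) + (2/3)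 * (pd 0 A p) * (D p) + (-1/3) * (pd 1 A p) * (C p) + (-1) * (pd 3 A p) + (2/9) * (pd 0 C p) * (C p) + (-1) * (pd 0 D p) * (A p) + (pd 1 D p)) ((2/9) * (pd 0 A p) * (A p)^2 + (2/3) * (pd 0 A p) * (C p) + (-2/3) * (pd 1 A p) * (A p) + (-5/9) * (pd 0 C p) * (A p) + (pd 1 C p) + (-2/3) * (pd 0 D p)))"

lemma bwd_point:
  assumes c0: "V2 A B D p - V3 A B C D B p - A p * V2 A B B p - C p * V2 A B A p + A p * V3 A B C D A p + (A p)^2 * V2 A B A p = 0" and c1: "2 * V1 A D p - V2 A B C p - 2 * A p * V1 A B p - V3 A B C D A p + A p * V2 A B A p + 2 * (A p)^2 * V1 A A p - 2 * C p * V1 A A p = 0" and c2: "V0 D p - 2 * V1 A C p + 3 * V1 A B p - A p * V0 B p - 2 * V2 A B A p - A p * V1 A A p - C p * V0 A p + (A p)^2 * V0 A p = 0" and c3: "V0 C p - 2 * V0 B p + V1 A A p + A p * V0 A p = 0"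
  shows "\<forall>a j k. pd j (\<lambda>q. hmat A B C D q $ a $ k) p - pd k (\<lambda>q. hmat A B C D q $ a $ j) p
          = - (\<Sum>b\<in>UNIV. TH A B C D p j $ a $ b * hmat A B C D p $ b $ k - TH A B C D p k $ a $ b * hmat A B C D p $ b $ j)"
proof -
  have e3: "pd 0 C p = ((-1) * (pd 1 A p) + 2 * (pd 0 B p))" using c3 unfolding V0_def V1_def V2_def V3_def by algebra
  have e2: "pd 0 D p = ((-2) * (pd 0 A p) * (B p) + (pd 0 A p) * (C p) + (pd 1 A p) * (A p) + 2 * (pd 2 A p) + (-3) * (pd 1 B p) + 2 * (pd 1 C p))" using c2[unfolded V0_def V1_def V2_def V3_def e3] by algebra
  have e1: "pd 1 D p = ((-1) * (pd 0 A p) * (A p) * (B p) + (1/2) * (pd 0 A p) * (A p) * (C p) + (-1/2) * (pd 0 A p) * (D p) + (1/2) * (pd 1 A p) * (A p)^2 + (1/2) * (pd 1 A p) * (B p) + (1/2) * (pd 1 A p) * (C p) + (pd 2 A p) * (A p) + (1/2) * (pd 3 A p) + (-1) * (pd 0 B p) * (B p) + (-2) * (pd 1 B p) * (A p) + (3/2) * (pd 1 C p) * (A p) + (1/2) * (pd 2 C p))" using c1[unfolded V0_def V1_def V2_def V3_def e3 e2] by algebra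
  have e0: "pd 2 D p = ((1/2) * (pd 0 A p) * (A p) * (D p) + (pd 0 A p) * (A p)^2 * (B p) + (-1/2) * (pd 0 A p) * (A p)^2 * (C p) + (-2) * (pd 0 A p) * (B p)^2 + (3/2) * (pd 1 A p) * (A p) * (B p) + (1/2) * (pd 1 A p) * (A p) * (C p) + (-1/2) * (pd 1 A p) * (A p)^3 + (-1) * (pd 2 A p) * (A p)^2 + 2 * (pd 2 A p) * (B p) + (pd 2 A p) * (C p) + (-1/2) * (pd 3 A p) * (A p) + (-1) * (pd 0 B p) * (A p) * (B p) + (pd 0 B p) * (A p) * (C p) + (-1) * (pd 0 B p) * (D p) + (pd 1 B p) * (A p)^2 + (-3) * (pd 1 B p) * (B p) + (-1) * (pd 1 B p) * (C p) + (pd 3 B p) + (-1/2) * (pd 1 C p) * (A p)^2 + 2 * (pd 1 C p) * (B p) + (1/2) * (pd 2 C p) * (A p))" using c0[unfolded V0_def V1_def V2_def V3_def e3 e2 e1] by algebra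
  define Q where "Q a j k \<longleftrightarrow> (pd j (\<lambda>q. hmat A B C D q $ a $ k) p - pd k (\<lambda>q. hmat A B C D q $ a $ j) p
          = - (\<Sum>b\<in>UNIV. TH A B C D p j $ a $ b * hmat A B C D p $ b $ k - TH A B C D p k $ a $ b * hmat A B C D p $ b $ j))" for a j k
  have sym: "Q a k j" if "Q a j k" for a j k
    using that unfolding Q_def by (simp add: sum4 algebra_simps)
  have diag: "Q a j j" for a j unfolding Q_def by simp
  have q001: "Q 0 0 1" unfolding Q_def
    by (simp add: sum4 hmat_def TH_def rhoD_def e0 e1 e2 e3; simp add: field_simps; algebra)
  have q002: "Q 0 0 2" unfolding Q_def
    by (simp add: sum4 hmat_def TH_def rhoD_def e0 e1 e2 e3; simp add: field_simps; algebra)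
  have q003: "Q 0 0 3" unfolding Q_def
    by (simp add: sum4 hmat_def TH_def rhoD_def e0 e1 e2 e3; simp add: field_simps; algebra)
  have q012: "Q 0 1 2" unfolding Q_def
    by (simp add: sum4 hmat_def TH_def rhoD_def e0 e1 e2 e3; simp add: field_simps; algebra)
  have q013: "Q 0 1 3" unfolding Q_def
    by (simp add: sum4 hmat_def TH_def rhoD_def e0 e1 e2 e3; simp add: field_simps; algebra)
  have q023: "Q 0 2 3" unfolding Q_def
    by (simp add: sum4 hmat_def TH_def rhoD_def e0 e1 e2 e3; simp add: field_simps; algebra)
  have q101: "Q 1 0 1" unfolding Q_def
    by (simp add: sum4 hmat_def TH_def rhoD_def e0 e1 e2 e3; simp add: field_simps; algebra)
  have q102: "Q 1 0 2" unfolding Q_def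
    by (simp add: sum4 hmat_def TH_def rhoD_def e0 e1 e2 e3; simp add: field_simps; algebra)
  have q103: "Q 1 0 3" unfolding Q_def
    by (simp add: sum4 hmat_def TH_def rhoD_def e0 e1 e2 e3; simp add: field_simps; algebra)
  have q112: "Q 1 1 2" unfolding Q_def
    by (simp add: sum4 hmat_def TH_def rhoD_def e0 e1 e2 e3; simp add: field_simps; algebra)
  have q113: "Q 1 1 3" unfolding Q_def
    by (simp add: sum4 hmat_def TH_def rhoD_def e0 e1 e2 e3; simp add: field_simps; algebra)
  have q123: "Q 1 2 3" unfolding Q_def
    by (simp add: sum4 hmat_def TH_def rhoD_def e0 e1 e2 e3; simp add: field_simps; algebra)
  have q201: "Q 2 0 1" unfolding Q_def
    by (simp add: sum4 hmat_def TH_def rhoD_def e0 e1 e2 e3; simp add: field_simps; algebra)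
  have q202: "Q 2 0 2" unfolding Q_def
    by (simp add: sum4 hmat_def TH_def rhoD_def e0 e1 e2 e3; simp add: field_simps; algebra)
  have q203: "Q 2 0 3" unfolding Q_def
    by (simp add: sum4 hmat_def TH_def rhoD_def e0 e1 e2 e3; simp add: field_simps; algebra)
  have q212: "Q 2 1 2" unfolding Q_def
    by (simp add: sum4 hmat_def TH_def rhoD_def e0 e1 e2 e3; simp add: field_simps; algebra)
  have q213: "Q 2 1 3" unfolding Q_def
    by (simp add: sum4 hmat_def TH_def rhoD_def e0 e1 e2 e3; simp add: field_simps; algebra)
  have q223: "Q 2 2 3" unfolding Q_def
    by (simp add: sum4 hmat_def TH_def rhoD_def e0 e1 e2 e3; simp add: field_simps; algebra)
  have q301: "Q 3 0 1" unfolding Q_def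
    by (simp add: sum4 hmat_def TH_def rhoD_def e0 e1 e2 e3; simp add: field_simps; algebra)
  have q302: "Q 3 0 2" unfolding Q_def
    by (simp add: sum4 hmat_def TH_def rhoD_def e0 e1 e2 e3; simp add: field_simps; algebra)
  have q303: "Q 3 0 3" unfolding Q_def
    by (simp add: sum4 hmat_def TH_def rhoD_def e0 e1 e2 e3; simp add: field_simps; algebra)
  have q312: "Q 3 1 2" unfolding Q_def
    by (simp add: sum4 hmat_def TH_def rhoD_def e0 e1 e2 e3; simp add: field_simps; algebra)
  have q313: "Q 3 1 3" unfolding Q_def
    by (simp add: sum4 hmat_def TH_def rhoD_def e0 e1 e2 e3; simp add: field_simps; algebra)
  have q323: "Q 3 2 3" unfolding Q_def
    by (simp add: sum4 hmat_def TH_def rhoD_def e0 e1 e2 e3; simp add: field_simps; algebra)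
  have "\<forall>a j k. Q a j k" unfolding all4 by (simp only: q001 sym[OF q001] q002 sym[OF q002] q003 sym[OF q003] q012 sym[OF q012] q013 sym[OF q013] q023 sym[OF q023] q101 sym[OF q101] q102 sym[OF q102] q103 sym[OF q103] q112 sym[OF q112] q113 sym[OF q113] q123 sym[OF q123] q201 sym[OF q201] q202 sym[OF q202] q203 sym[OF q203] q212 sym[OF q212] q213 sym[OF q213] q223 sym[OF q223] q301 sym[OF q301] q302 sym[OF q302] q303 sym[OF q303] q312 sym[OF q312] q313 sym[OF q313] q323 sym[OF q323] diag simp_thms)
  then show ?thesis unfolding Q_def .
qed

lemma gcon_rhoD': "gcon (rhoD a b c d)"
  by (simp add: gcon_def rhoD_def)

lemma smooth_divc: "open U \<Longrightarrow> smooth_on U f \<Longrightarrow> smooth_on U (\<lambda>x. f x / c)"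
proof -
  assume "open U" "smooth_on U f"
  then have "smooth_on U (\<lambda>x. f x * (1/c))" by (intro smooth_mult smooth_const)
  then show ?thesis by simp
qed

lemma smooth_pow: "open U \<Longrightarrow> smooth_on U f \<Longrightarrow> smooth_on U (\<lambda>x. f x ^ n)"
proof (induction n)
  case 0
  then show ?case by (simp add: smooth_const)
next
  case (Suc n)
  then have "smooth_on U (\<lambda>x. f x * f x ^ n)" by (intro smooth_mult) auto
  then show ?case by simp
qed

theorem theorem3:
  fixes U :: "(real^4) set" and A B C D :: "real^4 \<Rightarrow> real"
  assumes "open U"
    and "smooth_on U A" and "smooth_on U B" and "smooth_on U C" and "smooth_on U D"
  shows "torsion_free_Gstr U (hmat A B C D) \<longleftrightarrow>
    (\<forall>p\<in>U.
       V2 A B D p - V3 A B C D B p - A p * V2 A B B p - C p * V2 A B A p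
         + A p * V3 A B C D A p + (A p)^2 * V2 A B A p = 0 \<and>
       2 * V1 A D p - V2 A B C p - 2 * A p * V1 A B p - V3 A B C D A p
         + A p * V2 A B A p + 2 * (A p)^2 * V1 A A p - 2 * C p * V1 A A p = 0 \<and>
       V0 D p - 2 * V1 A C p + 3 * V1 A B p - A p * V0 B p - 2 * V2 A B A p
         - A p * V1 A A p - C p * V0 A p + (A p)^2 * V0 A p = 0 \<and>
       V0 C p - 2 * V0 B p + V1 A A p + A p * V0 A p = 0)"
proof
  assume "torsion_free_Gstr U (hmat A B C D)"
  then obtain th :: "real^4 \<Rightarrow> 4 \<Rightarrow> real^4^4" where
    G: "\<forall>p\<in>U. \<forall>j. th p j \<in> g3" and
    E: "\<forall>p\<in>U. \<forall>a j k.
          pd j (\<lambda>q. hmat A B C D q $ a $ k) p - pd k (\<lambda>q. hmat A B C D q $ a $ j) p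
          = - (\<Sum>b\<in>UNIV. th p j $ a $ b * hmat A B C D p $ b $ k - th p k $ a $ b * hmat A B C D p $ b $ j)"
    unfolding torsion_free_Gstr_def by blast
  show "\<forall>p\<in>U.
       V2 A B D p - V3 A B C D B p - A p * V2 A B B p - C p * V2 A B A p
         + A p * V3 A B C D A p + (A p)^2 * V2 A B A p = 0 \<and>
       2 * V1 A D p - V2 A B C p - 2 * A p * V1 A B p - V3 A B C D A p
         + A p * V2 A B A p + 2 * (A p)^2 * V1 A A p - 2 * C p * V1 A A p = 0 \<and>
       V0 D p - 2 * V1 A C p + 3 * V1 A B p - A p * V0 B p - 2 * V2 A B A p
         - A p * V1 A A p - C p * V0 A p + (A p)^2 * V0 A p = 0 \<and>
       V0 C p - 2 * V0 B p + V1 A A p + A p * V0 A p = 0"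
  proof
    fix p assume p: "p \<in> U"
    have g: "\<forall>j. gcon (th p j)" using G p g3_iff by blast
    from fwd_point[of A B C D p "th p", OF bspec[OF E p] g]
    show "V2 A B D p - V3 A B C D B p - A p * V2 A B B p - C p * V2 A B A p
         + A p * V3 A B C D A p + (A p)^2 * V2 A B A p = 0 \<and>
       2 * V1 A D p - V2 A B C p - 2 * A p * V1 A B p - V3 A B C D A p
         + A p * V2 A B A p + 2 * (A p)^2 * V1 A A p - 2 * C p * V1 A A p = 0 \<and>
       V0 D p - 2 * V1 A C p + 3 * V1 A B p - A p * V0 B p - 2 * V2 A B A p
         - A p * V1 A A p - C p * V0 A p + (A p)^2 * V0 A p = 0 \<and>
       V0 C p - 2 * V0 B p + V1 A A p + A p * V0 A p = 0" .
  qed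
next
  assume C: "\<forall>p\<in>U.
       V2 A B D p - V3 A B C D B p - A p * V2 A B B p - C p * V2 A B A p
         + A p * V3 A B C D A p + (A p)^2 * V2 A B A p = 0 \<and>
       2 * V1 A D p - V2 A B C p - 2 * A p * V1 A B p - V3 A B C D A p
         + A p * V2 A B A p + 2 * (A p)^2 * V1 A A p - 2 * C p * V1 A A p = 0 \<and>
       V0 D p - 2 * V1 A C p + 3 * V1 A B p - A p * V0 B p - 2 * V2 A B A p
         - A p * V1 A A p - C p * V0 A p + (A p)^2 * V0 A p = 0 \<and>
       V0 C p - 2 * V0 B p + V1 A A p + A p * V0 A p = 0"
  have sa: "\<And>f g. smooth_on U f \<Longrightarrow> smooth_on U g \<Longrightarrow> smooth_on U (\<lambda>x. f x + g x)"
    using smooth_add[OF assms(1)] .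
  have sm: "\<And>f g. smooth_on U f \<Longrightarrow> smooth_on U g \<Longrightarrow> smooth_on U (\<lambda>x. f x * g x)"
    using smooth_mult[OF assms(1)] .
  have sd: "\<And>f g. smooth_on U f \<Longrightarrow> smooth_on U g \<Longrightarrow> smooth_on U (\<lambda>x. f x - g x)"
    using smooth_diff[OF assms(1)] .
  have sn: "\<And>f. smooth_on U f \<Longrightarrow> smooth_on U (\<lambda>x. - f x)"
    using smooth_minus[OF assms(1)] .
  have sdc: "\<And>f c. smooth_on U f \<Longrightarrow> smooth_on U (\<lambda>x. f x / c)"
    using smooth_divc[OF assms(1)] .
  have sp: "\<And>f n. smooth_on U f \<Longrightarrow> smooth_on U (\<lambda>x. f x ^ n)"
    using smooth_pow[OF assms(1)] .
  have sc: "\<And>c. smooth_on U (\<lambda>x. c)" by (rule smooth_const)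
  have spd: "\<And>f i. smooth_on U f \<Longrightarrow> smooth_on U (pd i f)" by (rule smooth_pd)
  have S: "\<forall>j a b. smooth_on U (\<lambda>p. TH A B C D p j $ a $ b)"
    unfolding all4 by (simp add: TH_def rhoD_def;
        (intro conjI sa sm sd sn sdc sp sc spd assms(2-5))?)
  have Gs: "\<forall>p\<in>U. \<forall>j. TH A B C D p j \<in> g3"
    unfolding g3_iff all4 by (simp add: TH_def gcon_rhoD')
  have Es: "\<forall>p\<in>U. \<forall>a j k.
          pd j (\<lambda>q. hmat A B C D q $ a $ k) p - pd k (\<lambda>q. hmat A B C D q $ a $ j) p
          = - (\<Sum>b\<in>UNIV. TH A B C D p j $ a $ b * hmat A B C D p $ b $ k - TH A B C D p k $ a $ b * hmat A B C D p $ b $ j)"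
  proof
    fix p assume "p \<in> U"
    then show "\<forall>a j k.
          pd j (\<lambda>q. hmat A B C D q $ a $ k) p - pd k (\<lambda>q. hmat A B C D q $ a $ j) p
          = - (\<Sum>b\<in>UNIV. TH A B C D p j $ a $ b * hmat A B C D p $ b $ k - TH A B C D p k $ a $ b * hmat A B C D p $ b $ j)"
      using C by (intro bwd_point) auto
  qed
  show "torsion_free_Gstr U (hmat A B C D)"
    unfolding torsion_free_Gstr_def using S Gs Es by blast
qed

end
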